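(* Let $K$ be a finite field, $G$ a finite group, $\ell\ge 1$ an integer, $n=\ell|G|$, and let $\mathcal{C}\subseteq K^n$ be a $K$-linear code. Then $\mathcal{C}$ is a quasi-$G$ code of index $\ell$ if and only if $G$ is isomorphic to a subgroup $H$ of $\mathrm{PAut}(\mathcal{C})$ which acts freely on the coordinate set $\{1,\ldots,n\}$ with exactly $\ell$ orbits (i.e. of index $\ell$).
   Context: For a finite group $G$ with a fixed ordering $g_1,\ldots,g_m$ of its elements ($m=|G|$), the group algebra $KG$ is identified with $K^m$ via the $K$-linear isomorphism $\varphi:\sum_i a_ig_i\mapsto(a_1,\ldots,a_m)$; then $KG^\ell=KG\oplus\cdots\oplus KG$ ($\ell$ copies) is identified with $K^{m\ell}$ via $\varphi^\ell$. A $K$-linear code $\mathcal{C}\subseteq K^{n}$, $n=\ell|G|$, is called a quasi-$G$ code of index $\ell$ if, for some bijection between the coordinate set $\{1,\ldots,n\}$ and $\{1,\ldots,\ell\}\times G$ (equivalently, for some such identification $K^n\cong KG^\ell$), $\mathcal{C}$ corresponds to a right $KG$-submodule of $KG^\ell$. The symmetric group $S_n$ acts on $K^n$ by $v^\sigma=(v_{\sigma^{-1}(1)},\ldots,v_{\sigma^{-1}(n)})$, and $\mathrm{PAut}(\mathcal{C})=\{\sigma\in S_n : \mathcal{C}^\sigma=\mathcal{C}\}$ is the permutation automorphism group of $\mathcal{C}$. An action is free if no non-identity element fixes any point; for a free action of a finite group $H$ on an $n$-element set, all orbits have size $|H|$ and the index is $n/|H|$. *)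

theory Defs
  imports "HOL-Algebra.Sym_Groups" "HOL-Algebra.Group"
begin

text \<open>Vectors of K^n: functions on coordinates {1..n}, zero outside.\<close>
definition vecs :: "nat \<Rightarrow> (nat \<Rightarrow> 'k::field) set" where
  "vecs n = {v. \<forall>i. i \<notin> {1..n} \<longrightarrow> v i = 0}"

definition linear_code :: "nat \<Rightarrow> (nat \<Rightarrow> 'k::field) set \<Rightarrow> bool" where
  "linear_code n C \<longleftrightarrow> C \<subseteq> vecs n \<and> (\<lambda>_. 0) \<in> C
     \<and> (\<forall>u\<in>C. \<forall>v\<in>C. (\<lambda>i. u i + v i) \<in> C)
     \<and> (\<forall>a. \<forall>v\<in>C. (\<lambda>i. a * v i) \<in> C)"

definition perm_vec :: "(nat \<Rightarrow> 'k) \<Rightarrow> (nat \<Rightarrow> nat) \<Rightarrow> (nat \<Rightarrow> 'k)" where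
  "perm_vec v \<sigma> = (\<lambda>i. v (Hilbert_Choice.inv \<sigma> i))"

definition PAut :: "nat \<Rightarrow> (nat \<Rightarrow> 'k) set \<Rightarrow> (nat \<Rightarrow> nat) set" where
  "PAut n C = {\<sigma>. \<sigma> permutes {1..n} \<and> (\<lambda>v. perm_vec v \<sigma>) ` C = C}"

text \<open>KG^l identified with functions on {1..l} x G (extensional).  Elements of KG are
  functions a : G -> K (coefficients).  Right multiplication of u in KG^l by a in KG:
  (sum_y u_y y)(sum_h a_h h) has coefficient sum_h u_{x h^-1} a_h at x.\<close>
definition KG_dom :: "('g, 'm) monoid_scheme \<Rightarrow> nat \<Rightarrow> (nat \<times> 'g) set" where
  "KG_dom G l = {1..l} \<times> carrier G"

definition KGl :: "('g, 'm) monoid_scheme \<Rightarrow> nat \<Rightarrow> (nat \<times> 'g \<Rightarrow> 'k::field) set" where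
  "KGl G l = extensional (KG_dom G l)"

definition KG_rmult :: "('g, 'm) monoid_scheme \<Rightarrow> nat \<Rightarrow> (nat \<times> 'g \<Rightarrow> 'k::field)
     \<Rightarrow> ('g \<Rightarrow> 'k) \<Rightarrow> (nat \<times> 'g \<Rightarrow> 'k)" where
  "KG_rmult G l u a = restrict (\<lambda>(i, x). \<Sum>h\<in>carrier G. u (i, x \<otimes>\<^bsub>G\<^esub> inv\<^bsub>G\<^esub> h) * a h)
      (KG_dom G l)"

definition right_KG_submodule :: "('g, 'm) monoid_scheme \<Rightarrow> nat \<Rightarrow> (nat \<times> 'g \<Rightarrow> 'k::field) set \<Rightarrow> bool" where
  "right_KG_submodule G l M \<longleftrightarrow> M \<subseteq> KGl G l
     \<and> restrict (\<lambda>_. 0) (KG_dom G l) \<in> M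
     \<and> (\<forall>u\<in>M. \<forall>v\<in>M. restrict (\<lambda>p. u p + v p) (KG_dom G l) \<in> M)
     \<and> (\<forall>u\<in>M. restrict (\<lambda>p. - u p) (KG_dom G l) \<in> M)
     \<and> (\<forall>u\<in>M. \<forall>a. KG_rmult G l u a \<in> M)"

definition quasi_G_code :: "('g, 'm) monoid_scheme \<Rightarrow> nat \<Rightarrow> (nat \<Rightarrow> 'k::field) set \<Rightarrow> bool" where
  "quasi_G_code G l C \<longleftrightarrow> (\<exists>\<beta>. bij_betw \<beta> (KG_dom G l) {1..l * order G}
     \<and> right_KG_submodule G l ((\<lambda>v. restrict (\<lambda>p. v (\<beta> p)) (KG_dom G l)) ` C))"

definition acts_freely :: "(nat \<Rightarrow> nat) set \<Rightarrow> nat \<Rightarrow> bool" where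
  "acts_freely H n \<longleftrightarrow> (\<forall>\<sigma>\<in>H. \<forall>i\<in>{1..n}. \<sigma> i = i \<longrightarrow> \<sigma> = id)"

definition perm_orbits :: "(nat \<Rightarrow> nat) set \<Rightarrow> nat \<Rightarrow> nat set set" where
  "perm_orbits H n = (\<lambda>i. (\<lambda>\<sigma>. \<sigma> i) ` H) ` {1..n}"

end

theory Submission
  imports Defs
begin

lemma lc_sum:
  assumes "linear_code n C" "finite A" "\<And>a. a \<in> A \<Longrightarrow> f a \<in> C"
  shows "(\<lambda>i. \<Sum>a\<in>A. f a i) \<in> C"
  using assms(2,3)
proof (induction A rule: finite_induct)
  case empty then show ?case using assms(1) by (simp add: linear_code_def)
next
  case (insert x F)
  have add: "\<forall>u\<in>C. \<forall>v\<in>C. (\<lambda>i. u i + v i) \<in> C" using assms(1) unfolding linear_code_def by simp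
  have a1: "f x \<in> C" using insert.prems by simp
  have a2: "(\<lambda>i. \<Sum>a\<in>F. f a i) \<in> C" using insert by simp
  have "(\<lambda>i. f x i + (\<Sum>a\<in>F. f a i)) \<in> C" using add[rule_format, OF a1 a2] by simp
  then show ?case using insert by simp
qed

lemma lc_vecs: "linear_code n C \<Longrightarrow> v \<in> C \<Longrightarrow> i \<notin> {1..n} \<Longrightarrow> v i = 0"
  unfolding linear_code_def vecs_def by blast

context group begin

lemma fwd:
  assumes fin: "finite (carrier G)" and l1: "l \<ge> 1" and nn: "n = l * order G"
    and lc: "linear_code n C"
    and bij: "bij_betw \<beta> (KG_dom G l) {1..n}"
    and M: "right_KG_submodule G l ((\<lambda>v. restrict (\<lambda>p. v (\<beta> p)) (KG_dom G l)) ` C)"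
  shows "\<exists>H. subgroup H (sym_group n) \<and> H \<subseteq> PAut n C
       \<and> G \<cong> (sym_group n)\<lparr>carrier := H\<rparr>
       \<and> acts_freely H n \<and> card (perm_orbits H n) = l"
proof -
  define D where "D = KG_dom G l"
  define \<gamma> where "\<gamma> = inv_into D \<beta>"
  have bij': "bij_betw \<beta> D {1..n}" using bij D_def by simp
  have g1: "\<gamma> j \<in> D" "\<beta> (\<gamma> j) = j" if "j \<in> {1..n}" for j
    using bij' that unfolding \<gamma>_def
    by (auto intro: bij_betw_inv_into_right inv_into_into simp: bij_betw_def)
  have g2: "\<gamma> (\<beta> p) = p" if "p \<in> D" for p
    using bij' that unfolding \<gamma>_def by (simp add: bij_betw_inv_into_left)
  have binj: "\<beta> p = \<beta> q \<Longrightarrow> p \<in> D \<Longrightarrow> q \<in> D \<Longrightarrow> p = q" for p q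
    using bij' by (auto simp: bij_betw_def inj_on_def)
  have bin: "p \<in> D \<Longrightarrow> \<beta> p \<in> {1..n}" for p using bij' by (auto simp: bij_betw_def)
  have Dmem: "(i, x) \<in> D \<longleftrightarrow> i \<in> {1..l} \<and> x \<in> carrier G" for i x
    by (simp add: D_def KG_dom_def)
  define s where "s h j = (if j \<in> {1..n} then \<beta> (fst (\<gamma> j), snd (\<gamma> j) \<otimes> h) else j)" for h j
  have s_beta: "s h (\<beta> (i, x)) = \<beta> (i, x \<otimes> h)" if "(i, x) \<in> D" for h i x
    using that g2 bin by (simp add: s_def)
  have s_out: "j \<notin> {1..n} \<Longrightarrow> s h j = j" for h j unfolding s_def by presburger
  have jform: "\<exists>i x. (i, x) \<in> D \<and> j = \<beta> (i, x)" if "j \<in> {1..n}" for j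
    using g1[OF that] by (metis prod.collapse)
  have s_comp: "s k (s h j) = s (h \<otimes> k) j" if "h \<in> carrier G" "k \<in> carrier G" for h k j
  proof (cases "j \<in> {1..n}")
    case True
    then obtain i x where ix: "(i, x) \<in> D" "j = \<beta> (i, x)" using jform by blast
    then show ?thesis using that by (simp add: s_beta Dmem m_assoc)
  qed (simp add: s_out)
  have s_one: "s \<one> j = j" for j
  proof (cases "j \<in> {1..n}")
    case True
    then obtain i x where ix: "(i, x) \<in> D" "j = \<beta> (i, x)" using jform by blast
    then show ?thesis by (simp add: s_beta Dmem)
  qed (simp add: s_out)
  have s_id: "s h \<circ> s (inv h) = id" "s (inv h) \<circ> s h = id" if "h \<in> carrier G" for h
    using that by (auto simp: fun_eq_iff s_comp s_one)
  have s_inv: "inv' (s h) = s (inv h)" if "h \<in> carrier G" for h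
    using s_id[OF that] by (rule inv_unique_comp)
  have s_in: "s h j \<in> {1..n}" if jn: "j \<in> {1..n}" and hh: "h \<in> carrier G" for h j
  proof -
    obtain i x where ix: "(i, x) \<in> D" "j = \<beta> (i, x)" using jform jn by blast
    then show ?thesis using hh bin[of "(i, x \<otimes> h)"] by (simp add: s_beta Dmem)
  qed
  have s_perm: "s h permutes {1..n}" if "h \<in> carrier G" for h
  proof (rule bij_imp_permutes)
    show "bij_betw (s h) {1..n} {1..n}"
      apply (rule bij_betwI[where g = "s (inv h)"])
      using that s_in s_comp s_one by auto
  qed (simp add: s_out)
  have key: "perm_vec v (s h) \<in> C" if v: "v \<in> C" and h: "h \<in> carrier G" for v h
  proof -
    define u where "u = restrict (\<lambda>p. v (\<beta> p)) D"
    define w where "w = KG_rmult G l u (\<lambda>k. if k = h then 1 else 0)"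
    have "u \<in> (\<lambda>v. restrict (\<lambda>p. v (\<beta> p)) (KG_dom G l)) ` C" using v u_def D_def by blast
    then have "w \<in> (\<lambda>v. restrict (\<lambda>p. v (\<beta> p)) (KG_dom G l)) ` C"
      using M unfolding right_KG_submodule_def w_def by blast
    then obtain v' where v': "v' \<in> C" "w = restrict (\<lambda>p. v' (\<beta> p)) D" using D_def by blast
    have wval: "w (i, x) = v (\<beta> (i, x \<otimes> inv h))" if "(i, x) \<in> D" for i x
    proof -
      have "w (i, x) = (\<Sum>k\<in>carrier G. u (i, x \<otimes> inv k) * (if k = h then 1 else 0))"
        using that unfolding w_def KG_rmult_def D_def by simp
      also have "\<dots> = (\<Sum>k\<in>carrier G. if k = h then u (i, x \<otimes> inv k) else 0)"
        by (rule sum.cong) auto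
      also have "\<dots> = u (i, x \<otimes> inv h)" using h fin by (simp add: sum.delta')
      also have "\<dots> = v (\<beta> (i, x \<otimes> inv h))" using that h by (simp add: u_def Dmem)
      finally show ?thesis .
    qed
    have "perm_vec v (s h) = v'"
    proof
      fix j
      show "perm_vec v (s h) j = v' j"
      proof (cases "j \<in> {1..n}")
        case True
        then obtain i x where ix: "(i, x) \<in> D" "j = \<beta> (i, x)" using jform by blast
        have "v' j = w (i, x)" using v' ix by simp
        also have "\<dots> = v (\<beta> (i, x \<otimes> inv h))" using wval ix by simp
        also have "\<dots> = perm_vec v (s h) j"
          using ix h by (simp add: perm_vec_def s_inv s_beta)
        finally show ?thesis by simp
      next
        case False
        then show ?thesis using v v' lc h
          by (simp add: perm_vec_def s_inv s_out lc_vecs)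
      qed
    qed
    then show ?thesis using v' by simp
  qed
  have pv_comp: "perm_vec (perm_vec v (s (inv h))) (s h) = v" if "h \<in> carrier G" for v h
    using that by (simp add: perm_vec_def s_inv s_comp s_one fun_eq_iff)
  have s_PAut: "s h \<in> PAut n C" if h: "h \<in> carrier G" for h
    unfolding PAut_def
  proof (intro CollectI conjI)
    show "s h permutes {1..n}" using s_perm h .
    show "(\<lambda>v. perm_vec v (s h)) ` C = C"
    proof
      show "(\<lambda>v. perm_vec v (s h)) ` C \<subseteq> C" using key h by blast
      show "C \<subseteq> (\<lambda>v. perm_vec v (s h)) ` C"
      proof
        fix v assume "v \<in> C"
        then have "perm_vec v (s (inv h)) \<in> C" using key h by simp
        then show "v \<in> (\<lambda>v. perm_vec v (s h)) ` C" using pv_comp[OF h, of v]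
          by (metis image_eqI)
      qed
    qed
  qed
  define f where "f g = s (inv g)" for g
  have f_hom: "f \<in> hom G (sym_group n)"
    unfolding hom_def
  proof (intro CollectI conjI ballI)
    show "f \<in> carrier G \<rightarrow> carrier (sym_group n)"
      using s_perm by (auto simp: f_def sym_group_carrier)
    fix x y assume "x \<in> carrier G" "y \<in> carrier G"
    then show "f (x \<otimes> y) = f x \<otimes>\<^bsub>sym_group n\<^esub> f y"
      by (simp add: f_def sym_group_mult inv_mult_group s_comp fun_eq_iff)
  qed
  obtain i0 where i0: "i0 \<in> {1..l}" using l1 by auto
  have f_inj: "inj_on f (carrier G)"
  proof
    fix x y assume xy: "x \<in> carrier G" "y \<in> carrier G" "f x = f y"
    then have "s (inv x) (\<beta> (i0, \<one>)) = s (inv y) (\<beta> (i0, \<one>))" by (simp add: f_def)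
    then have e: "\<beta> (i0, inv x) = \<beta> (i0, inv y)" using xy i0 by (simp add: s_beta Dmem)
    have "(i0, inv x) = (i0, inv y)" by (rule binj[OF e]) (use xy i0 in \<open>auto simp: Dmem\<close>)
    then have "inv x = inv y" by simp
    then show "x = y" using xy by (metis inv_inv)
  qed
  define H where "H = f ` carrier G"
  have sub: "subgroup H (sym_group n)"
    unfolding H_def
    by (rule group_hom.img_is_subgroup)
       (simp add: group_hom_def group_hom_axioms_def f_hom sym_group_is_group is_group)
  have iso: "G \<cong> (sym_group n)\<lparr>carrier := H\<rparr>"
  proof (rule is_isoI)
    show "f \<in> iso G ((sym_group n)\<lparr>carrier := H\<rparr>)"
      unfolding iso_iff using f_hom f_inj by (auto simp: hom_def H_def)
  qed
  have PA: "H \<subseteq> PAut n C" using s_PAut by (auto simp: H_def f_def)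
  have free: "acts_freely H n"
    unfolding acts_freely_def
  proof (intro ballI impI)
    fix \<sigma> j assume \<sigma>: "\<sigma> \<in> H" and j: "j \<in> {1..n}" and fx: "\<sigma> j = j"
    obtain g where g: "g \<in> carrier G" "\<sigma> = s (inv g)" using \<sigma> by (auto simp: H_def f_def)
    obtain i x where ix: "(i, x) \<in> D" "j = \<beta> (i, x)" using jform j by blast
    have e: "\<beta> (i, x \<otimes> inv g) = \<beta> (i, x)" using fx g ix by (simp add: s_beta)
    have "(i, x \<otimes> inv g) = (i, x)" by (rule binj[OF e]) (use ix g in \<open>auto simp: Dmem\<close>)
    then have "x \<otimes> inv g = x" by simp
    moreover have xc: "x \<in> carrier G" using ix by (simp add: Dmem)
    ultimately have "inv g = \<one>" using l_cancel_one[OF xc inv_closed[OF g(1)]] by simp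
    then show "\<sigma> = id" using g by (simp add: s_one fun_eq_iff)
  qed
  have orb: "(\<lambda>\<sigma>. \<sigma> (\<beta> (i, x))) ` H = \<beta> ` ({i} \<times> carrier G)" if "(i, x) \<in> D" for i x
  proof
    show "(\<lambda>\<sigma>. \<sigma> (\<beta> (i, x))) ` H \<subseteq> \<beta> ` ({i} \<times> carrier G)"
      using that by (auto simp: H_def f_def s_beta Dmem)
    show "\<beta> ` ({i} \<times> carrier G) \<subseteq> (\<lambda>\<sigma>. \<sigma> (\<beta> (i, x))) ` H"
    proof
      fix j assume "j \<in> \<beta> ` ({i} \<times> carrier G)"
      then obtain y where y: "y \<in> carrier G" "j = \<beta> (i, y)" by auto
      define g where "g = inv (inv x \<otimes> y)"
      have x: "x \<in> carrier G" using that by (simp add: Dmem)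
      have gc: "g \<in> carrier G" using x y by (simp add: g_def)
      have "x \<otimes> inv g = y" using x y by (simp add: g_def m_assoc[symmetric])
      then have "f g (\<beta> (i, x)) = j" using that y gc by (simp add: f_def s_beta)
      then show "j \<in> (\<lambda>\<sigma>. \<sigma> (\<beta> (i, x))) ` H" using gc H_def by blast
    qed
  qed
  have orbs: "perm_orbits H n = (\<lambda>i. \<beta> ` ({i} \<times> carrier G)) ` {1..l}"
  proof
    show "perm_orbits H n \<subseteq> (\<lambda>i. \<beta> ` ({i} \<times> carrier G)) ` {1..l}"
    proof
      fix Ob assume "Ob \<in> perm_orbits H n"
      then obtain j where j: "j \<in> {1..n}" "Ob = (\<lambda>\<sigma>. \<sigma> j) ` H" by (auto simp: perm_orbits_def)
      obtain i x where ix: "(i, x) \<in> D" "j = \<beta> (i, x)" using jform j by blast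
      then show "Ob \<in> (\<lambda>i. \<beta> ` ({i} \<times> carrier G)) ` {1..l}"
        using j orb by (auto simp: Dmem)
    qed
    show "(\<lambda>i. \<beta> ` ({i} \<times> carrier G)) ` {1..l} \<subseteq> perm_orbits H n"
    proof
      fix Ob assume "Ob \<in> (\<lambda>i. \<beta> ` ({i} \<times> carrier G)) ` {1..l}"
      then obtain i where i: "i \<in> {1..l}" "Ob = \<beta> ` ({i} \<times> carrier G)" by auto
      have d: "(i, \<one>) \<in> D" using i by (simp add: Dmem)
      then have "Ob = (\<lambda>\<sigma>. \<sigma> (\<beta> (i, \<one>))) ` H" using orb i by simp
      then show "Ob \<in> perm_orbits H n" using bin[OF d] by (auto simp: perm_orbits_def)
    qed
  qed
  have "inj_on (\<lambda>i. \<beta> ` ({i} \<times> carrier G)) {1..l}"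
  proof
    fix i i' assume ii: "i \<in> {1..l}" "i' \<in> {1..l}"
      "\<beta> ` ({i} \<times> carrier G) = \<beta> ` ({i'} \<times> carrier G)"
    then have "\<beta> (i, \<one>) \<in> \<beta> ` ({i'} \<times> carrier G)" by auto
    then obtain y where y: "y \<in> carrier G" "\<beta> (i, \<one>) = \<beta> (i', y)" by auto
    have "(i, \<one>) = (i', y)" by (rule binj[OF y(2)]) (use ii y(1) in \<open>auto simp: Dmem\<close>)
    then show "i = i'" by simp
  qed
  then have cd: "card (perm_orbits H n) = l" by (simp add: orbs card_image)
  show ?thesis
    by (rule exI[where x=H]) (intro conjI sub PA iso free cd)
qed

end

context group begin

lemma bwd:
  assumes fin: "finite (carrier G)" and l1: "l \<ge> 1" and nn: "n = l * order G"
    and lc: "linear_code n C"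
    and sub: "subgroup H (sym_group n)" and PA: "H \<subseteq> PAut n C"
    and iso: "G \<cong> (sym_group n)\<lparr>carrier := H\<rparr>"
    and free: "acts_freely H n" and cardO: "card (perm_orbits H n) = l"
  shows "quasi_G_code G l C"
proof -
  obtain \<phi> where \<phi>: "\<phi> \<in> iso G ((sym_group n)\<lparr>carrier := H\<rparr>)"
    using iso unfolding is_iso_def by blast
  have \<phi>hom: "\<phi> \<in> hom G ((sym_group n)\<lparr>carrier := H\<rparr>)" using \<phi> by (simp add: iso_iff)
  have \<phi>H: "\<phi> g \<in> H" if "g \<in> carrier G" for g using \<phi>hom that by (auto simp: hom_def)
  have \<phi>mult: "\<phi> (x \<otimes> y) = \<phi> x \<circ> \<phi> y" if "x \<in> carrier G" "y \<in> carrier G" for x y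
    using \<phi>hom that by (simp add: hom_def sym_group_mult)
  have \<phi>inj: "inj_on \<phi> (carrier G)" using \<phi> by (simp add: iso_iff)
  have \<phi>img: "\<phi> ` carrier G = H" using \<phi> by (simp add: iso_iff)
  have grpH: "group ((sym_group n)\<lparr>carrier := H\<rparr>)"
    using subgroup.subgroup_is_group[OF sub sym_group_is_group] .
  have \<phi>one: "\<phi> \<one> = id"
    using hom_one[OF \<phi>hom is_group grpH] by (simp add: sym_group_one)
  have Hperm: "\<sigma> permutes {1..n}" if "\<sigma> \<in> H" for \<sigma>
    using subgroup.subset[OF sub] that by (auto simp: sym_group_carrier)
  have \<phi>perm: "\<phi> g permutes {1..n}" if "g \<in> carrier G" for g using Hperm \<phi>H that by blast
  have \<phi>inv: "\<phi> (inv g) (\<phi> g j) = j" "\<phi> g (\<phi> (inv g) j) = j" if "g \<in> carrier G" for g j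
    using \<phi>mult[of "inv g" g] \<phi>mult[of g "inv g"] \<phi>one that by (auto simp: fun_eq_iff)
  have \<phi>inv': "inv' (\<phi> (inv g)) = \<phi> g" if "g \<in> carrier G" for g
    by (rule inv_unique_comp) (use \<phi>inv[OF that] in \<open>auto simp: fun_eq_iff\<close>)
  define orb where "orb j = (\<lambda>\<sigma>. \<sigma> j) ` H" for j
  have orb_eq: "orb (\<phi> g j) = orb j" if "g \<in> carrier G" for g j
  proof
    show "orb (\<phi> g j) \<subseteq> orb j"
    proof
      fix k assume "k \<in> orb (\<phi> g j)"
      then obtain h where h: "h \<in> carrier G" "k = \<phi> h (\<phi> g j)" unfolding orb_def using \<phi>img by auto
      then have "k = \<phi> (h \<otimes> g) j" using that \<phi>mult by simp
      then show "k \<in> orb j" unfolding orb_def using \<phi>H h that by blast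
    qed
    show "orb j \<subseteq> orb (\<phi> g j)"
    proof
      fix k assume "k \<in> orb j"
      then obtain h where h: "h \<in> carrier G" "k = \<phi> h j" unfolding orb_def using \<phi>img by auto
      then have "k = \<phi> (h \<otimes> inv g) (\<phi> g j)" using that \<phi>mult \<phi>inv by simp
      then show "k \<in> orb (\<phi> g j)" unfolding orb_def using \<phi>H h that by blast
    qed
  qed
  have finO: "finite (perm_orbits H n)" unfolding perm_orbits_def by simp
  obtain e where e: "bij_betw e {1..l} (perm_orbits H n)"
    using ex_bij_betw_nat_finite_1[OF finO] cardO by auto
  have ex_r: "\<exists>j. j \<in> {1..n} \<and> orb j = e i" if "i \<in> {1..l}" for i
  proof -
    have "e i \<in> perm_orbits H n" using e that by (auto simp: bij_betw_def)
    then show ?thesis unfolding perm_orbits_def orb_def by blast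
  qed
  define r where "r i = (SOME j. j \<in> {1..n} \<and> orb j = e i)" for i
  have r0: "r i \<in> {1..n} \<and> orb (r i) = e i" if "i \<in> {1..l}" for i
    unfolding r_def by (rule someI_ex[OF ex_r[OF that]])
  have r: "r i \<in> {1..n}" "orb (r i) = e i" if "i \<in> {1..l}" for i
    using r0[OF that] by simp_all
  have einj: "e i = e i' \<Longrightarrow> i \<in> {1..l} \<Longrightarrow> i' \<in> {1..l} \<Longrightarrow> i = i'" for i i'
    using e by (meson bij_betw_def inj_onD)
  define D where "D = KG_dom G l"
  have Dmem: "(i, x) \<in> D \<longleftrightarrow> i \<in> {1..l} \<and> x \<in> carrier G" for i x
    by (simp add: D_def KG_dom_def)
  define \<beta> where "\<beta> p = \<phi> (inv (snd p)) (r (fst p))" for p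
  have \<beta>in: "\<beta> p \<in> {1..n}" if "p \<in> D" for p
  proof -
    obtain i x where p: "p = (i, x)" by (cases p)
    have ix: "i \<in> {1..l}" "x \<in> carrier G" using that p Dmem by auto
    have pp: "\<phi> (inv x) permutes {1..n}" using \<phi>perm ix by simp
    have "\<phi> (inv x) (r i) \<in> {1..n}" using permutes_in_image[OF pp] r(1)[OF ix(1)] by blast
    then show ?thesis using p by (simp add: \<beta>_def)
  qed
  have \<beta>inj: "inj_on \<beta> D"
  proof
    fix p q assume p: "p \<in> D" and q: "q \<in> D" and eq: "\<beta> p = \<beta> q"
    obtain i x where pi: "p = (i, x)" by (cases p)
    obtain i' y where qi: "q = (i', y)" by (cases q)
    have ix: "i \<in> {1..l}" "x \<in> carrier G" "i' \<in> {1..l}" "y \<in> carrier G"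
      using p q pi qi Dmem by auto
    have eq': "\<phi> (inv x) (r i) = \<phi> (inv y) (r i')" using eq pi qi by (simp add: \<beta>_def)
    have "e i = orb (\<phi> (inv x) (r i))" using orb_eq r ix by simp
    also have "\<dots> = e i'" using eq' orb_eq r ix by simp
    finally have ii: "i = i'" using einj ix by blast
    have "\<phi> y (\<phi> (inv x) (r i)) = r i" using eq' ii ix \<phi>inv by simp
    then have "\<phi> (y \<otimes> inv x) (r i) = r i" using ix \<phi>mult by simp
    then have "\<phi> (y \<otimes> inv x) = id"
      using free \<phi>H ix r unfolding acts_freely_def by blast
    then have "\<phi> (y \<otimes> inv x) = \<phi> \<one>" using \<phi>one by simp
    then have "y \<otimes> inv x = \<one>" using \<phi>inj ix by (simp add: inj_on_def)
    then have "y = x" using ix by (metis inv_equality inv_inv inv_closed)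
    then show "p = q" using pi qi ii by simp
  qed
  have cardD: "card D = n"
    using nn by (simp add: D_def KG_dom_def card_cartesian_product order_def)
  have bij: "bij_betw \<beta> D {1..n}"
  proof -
    have sub1: "\<beta> ` D \<subseteq> {1..n}" using \<beta>in by blast
    have "card (\<beta> ` D) = card {1..n}" using card_image[OF \<beta>inj] cardD by simp
    then have "\<beta> ` D = {1..n}" using card_subset_eq[OF _ sub1] by simp
    then show ?thesis using \<beta>inj by (simp add: bij_betw_def)
  qed
  have \<beta>shift: "\<beta> (i, x \<otimes> inv h) = \<phi> h (\<beta> (i, x))"
    if "x \<in> carrier G" "h \<in> carrier G" for i x h
    using that by (simp add: \<beta>_def inv_mult_group \<phi>mult)
  have PAmem: "perm_vec v (\<phi> g) \<in> C" if "v \<in> C" "g \<in> carrier G" for v g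
    using PA \<phi>H that unfolding PAut_def by blast
  define M where "M = (\<lambda>v. restrict (\<lambda>p. v (\<beta> p)) D) ` C"
  have lcC: "C \<subseteq> vecs n" "(\<lambda>_. 0) \<in> C" "\<And>u v. u \<in> C \<Longrightarrow> v \<in> C \<Longrightarrow> (\<lambda>i. u i + v i) \<in> C"
    "\<And>a v. v \<in> C \<Longrightarrow> (\<lambda>i. a * v i) \<in> C"
    using lc unfolding linear_code_def by auto
  have "right_KG_submodule G l M"
    unfolding right_KG_submodule_def
  proof (intro conjI ballI allI)
    show "M \<subseteq> KGl G l" by (auto simp: M_def KGl_def D_def)
    show "restrict (\<lambda>_. 0) (KG_dom G l) \<in> M"
      unfolding M_def D_def using lcC(2) by (intro image_eqI[where x="\<lambda>_. 0"]) auto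
  next
    fix u v assume "u \<in> M" "v \<in> M"
    then obtain u' v' where u': "u' \<in> C" "u = restrict (\<lambda>p. u' (\<beta> p)) D"
      and v': "v' \<in> C" "v = restrict (\<lambda>p. v' (\<beta> p)) D" by (auto simp: M_def)
    show "restrict (\<lambda>p. u p + v p) (KG_dom G l) \<in> M"
      unfolding M_def
      by (rule image_eqI[where x="\<lambda>i. u' i + v' i"])
         (use u' v' lcC(3) in \<open>auto simp: D_def\<close>)
  next
    fix u assume "u \<in> M"
    then obtain u' where u': "u' \<in> C" "u = restrict (\<lambda>p. u' (\<beta> p)) D" by (auto simp: M_def)
    show "restrict (\<lambda>p. - u p) (KG_dom G l) \<in> M"
      unfolding M_def
    proof (rule image_eqI[where x="\<lambda>i. - u' i"])
      have "(\<lambda>i. (-1) * u' i) \<in> C" using lcC(4)[OF u'(1)] .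
      then show "(\<lambda>i. - u' i) \<in> C" by simp
    qed (use u' in \<open>auto simp: D_def\<close>)
  next
    fix u a assume "u \<in> M"
    then obtain v where v: "v \<in> C" "u = restrict (\<lambda>p. v (\<beta> p)) D" by (auto simp: M_def)
    define z where "z = (\<lambda>j. \<Sum>h\<in>carrier G. a h * perm_vec v (\<phi> (inv h)) j)"
    have zC: "z \<in> C" unfolding z_def
      by (rule lc_sum[OF lc fin]) (use lcC(4) PAmem v in simp)
    have "KG_rmult G l u a = restrict (\<lambda>p. z (\<beta> p)) D"
    proof
      fix p show "KG_rmult G l u a p = restrict (\<lambda>p. z (\<beta> p)) D p"
      proof (cases "p \<in> D")
        case True
        then obtain i x where p: "p = (i, x)" "i \<in> {1..l}" "x \<in> carrier G"
          by (cases p) (auto simp: Dmem)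
        have "KG_rmult G l u a p = (\<Sum>h\<in>carrier G. u (i, x \<otimes> inv h) * a h)"
          using True p by (simp add: KG_rmult_def D_def)
        also have "\<dots> = (\<Sum>h\<in>carrier G. a h * perm_vec v (\<phi> (inv h)) (\<beta> (i, x)))"
        proof (rule sum.cong)
          fix h assume h: "h \<in> carrier G"
          have "u (i, x \<otimes> inv h) = v (\<beta> (i, x \<otimes> inv h))" using v p h by (simp add: Dmem)
          also have "\<dots> = perm_vec v (\<phi> (inv h)) (\<beta> (i, x))"
            using p h by (simp add: \<beta>shift perm_vec_def \<phi>inv')
          finally show "u (i, x \<otimes> inv h) * a h = a h * perm_vec v (\<phi> (inv h)) (\<beta> (i, x))"
            by (simp add: mult.commute)
        qed simp
        finally show ?thesis using True p by (simp add: z_def)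
      next
        case False then show ?thesis by (simp add: KG_rmult_def D_def)
      qed
    qed
    then show "KG_rmult G l u a \<in> M" unfolding M_def using zC by blast
  qed
  then show ?thesis unfolding quasi_G_code_def using bij nn
    by (intro exI[where x=\<beta>]) (simp add: M_def D_def)
qed

end

theorem mainTheorem1:
  fixes G :: "('g, 'm) monoid_scheme" and l n :: nat and C :: "(nat \<Rightarrow> 'k::{field, finite}) set"
  assumes "group G" and "finite (carrier G)" and "l \<ge> 1" and "n = l * order G"
    and "linear_code n C"
  shows "quasi_G_code G l C \<longleftrightarrow>
    (\<exists>H. subgroup H (sym_group n) \<and> H \<subseteq> PAut n C
       \<and> G \<cong> (sym_group n)\<lparr>carrier := H\<rparr>
       \<and> acts_freely H n \<and> card (perm_orbits H n) = l)"
proof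
  assume "quasi_G_code G l C"
  then obtain \<beta> where b: "bij_betw \<beta> (KG_dom G l) {1..l * order G}"
    "right_KG_submodule G l ((\<lambda>v. restrict (\<lambda>p. v (\<beta> p)) (KG_dom G l)) ` C)"
    unfolding quasi_G_code_def by blast
  show "\<exists>H. subgroup H (sym_group n) \<and> H \<subseteq> PAut n C
       \<and> G \<cong> (sym_group n)\<lparr>carrier := H\<rparr>
       \<and> acts_freely H n \<and> card (perm_orbits H n) = l"
    using group.fwd[OF assms(1,2,3,4,5), of \<beta>] b assms(4) by simp
next
  assume "\<exists>H. subgroup H (sym_group n) \<and> H \<subseteq> PAut n C
       \<and> G \<cong> (sym_group n)\<lparr>carrier := H\<rparr>
       \<and> acts_freely H n \<and> card (perm_orbits H n) = l"
  then show "quasi_G_code G l C"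
    using group.bwd[OF assms(1,2,3,4,5)] by blast
qed

end
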